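(* Let $X$ be a topological space and let $\mathrm{Fer}(X)$ denote the set of closed subsets of $X$. For $W\in\mathrm{Fer}(X)$ put $\mathfrak{Z}(W)=\{Z\in\mathrm{Fer}(X)\mid Z\supseteq W\}$. For $W_1,W_2\in\mathrm{Fer}(X)$ with $W_1\subseteq W_2$, define $\delta^{W_2}_{W_1}:\mathfrak{Z}(W_1)\to\mathfrak{Z}(W_2)$ by $\delta^{W_2}_{W_1}(Z)=Z\cup W_2$. Then $\mathfrak{Z}$, together with the maps $\delta^{W_2}_{W_1}$, is a conciliation in $X$.
   Context: A pre-conciliation $G$ in a topological space $X$ consists of a set $G(W)$ for each closed set $W\in\mathrm{Fer}(X)$, and for all closed $W_1\subseteq W_2$ a map (called a mediation) $\delta^{W_2}_{W_1}:G(W_1)\to G(W_2)$, such that $\delta^W_W$ is the identity map of $G(W)$ for every closed $W$, and $\delta^{W_3}_{W_2}\circ\delta^{W_2}_{W_1}=\delta^{W_3}_{W_1}$ whenever $W_1\subseteq W_2\subseteq W_3$ are closed. A family $(W_i)_{i\in I}$ is a finite closed co-covering of $W\in\mathrm{Fer}(X)$ if $I$ is finite, each $W_i$ is closed, and $W=\bigcap_{i\in I}W_i$. A pre-conciliation $G$ is unified if for every nonempty closed $W$, every finite closed co-covering $(W_i)_{i\in I}$ of $W$, and all $t,s\in G(W)$: if $\delta^{W_j}_W(t)=\delta^{W_j}_W(s)$ for all $j\in I$, then $t=s$. A unified pre-conciliation $G$ is a conciliation if for every nonempty closed $W$, every finite closed co-covering $(W_i)_{i\in I}$ of $W$, and every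 family $(t_i)_{i\in I}$ with $t_i\in G(W_i)$ satisfying $\delta^{W_i\cup W_j}_{W_i}(t_i)=\delta^{W_i\cup W_j}_{W_j}(t_j)$ for all $i,j\in I$, there exists a unique $t\in G(W)$ with $\delta^{W_i}_W(t)=t_i$ for all $i\in I$. *)

theory Defs
  imports "HOL-Analysis.Analysis"
begin

text \<open>A pre-conciliation in the topological space X: G W is the set attached to the closed
  set W, and med W2 W1 is the mediation map from G W1 to G W2 (for closed W1 \<subseteq> W2).\<close>

definition pre_conciliation ::
  "'a topology \<Rightarrow> ('a set \<Rightarrow> 'b set) \<Rightarrow> ('a set \<Rightarrow> 'a set \<Rightarrow> 'b \<Rightarrow> 'b) \<Rightarrow> bool" where
  "pre_conciliation X G med \<longleftrightarrow>
     (\<forall>W1 W2. closedin X W1 \<and> closedin X W2 \<and> W1 \<subseteq> W2 \<longrightarrow>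
        (\<forall>t\<in>G W1. med W2 W1 t \<in> G W2)) \<and>
     (\<forall>W. closedin X W \<longrightarrow> (\<forall>t\<in>G W. med W W t = t)) \<and>
     (\<forall>W1 W2 W3. closedin X W1 \<and> closedin X W2 \<and> closedin X W3 \<and> W1 \<subseteq> W2 \<and> W2 \<subseteq> W3 \<longrightarrow>
        (\<forall>t\<in>G W1. med W3 W2 (med W2 W1 t) = med W3 W1 t))"

text \<open>Finite closed co-covering (W_i)_{i \<in> I} of W; the intersection is taken inside X,
  so that the empty family co-covers X.\<close>

definition finite_closed_cocovering ::
  "'a topology \<Rightarrow> 'a set \<Rightarrow> nat set \<Rightarrow> (nat \<Rightarrow> 'a set) \<Rightarrow> bool" where
  "finite_closed_cocovering X W I Ws \<longleftrightarrow>
     finite I \<and> (\<forall>i\<in>I. closedin X (Ws i)) \<and> W = topspace X \<inter> (\<Inter>i\<in>I. Ws i)"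

definition unified ::
  "'a topology \<Rightarrow> ('a set \<Rightarrow> 'b set) \<Rightarrow> ('a set \<Rightarrow> 'a set \<Rightarrow> 'b \<Rightarrow> 'b) \<Rightarrow> bool" where
  "unified X G med \<longleftrightarrow> pre_conciliation X G med \<and>
     (\<forall>W I Ws. closedin X W \<and> W \<noteq> {} \<and> finite_closed_cocovering X W I Ws \<longrightarrow>
        (\<forall>t\<in>G W. \<forall>s\<in>G W. (\<forall>j\<in>I. med (Ws j) W t = med (Ws j) W s) \<longrightarrow> t = s))"

definition conciliation ::
  "'a topology \<Rightarrow> ('a set \<Rightarrow> 'b set) \<Rightarrow> ('a set \<Rightarrow> 'a set \<Rightarrow> 'b \<Rightarrow> 'b) \<Rightarrow> bool" where
  "conciliation X G med \<longleftrightarrow> unified X G med \<and>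
     (\<forall>W I Ws ts. closedin X W \<and> W \<noteq> {} \<and> finite_closed_cocovering X W I Ws \<and>
        (\<forall>i\<in>I. ts i \<in> G (Ws i)) \<and>
        (\<forall>i\<in>I. \<forall>j\<in>I. med (Ws i \<union> Ws j) (Ws i) (ts i) = med (Ws i \<union> Ws j) (Ws j) (ts j)) \<longrightarrow>
        (\<exists>!t. t \<in> G W \<and> (\<forall>i\<in>I. med (Ws i) W t = ts i)))"

definition Zfrak :: "'a topology \<Rightarrow> 'a set \<Rightarrow> 'a set set" where
  "Zfrak X W = {Z. closedin X Z \<and> W \<subseteq> Z}"

end

theory Submission
  imports Defs
begin

lemma uni_aux:
  assumes "closedin X t" "closedin X s" "W \<subseteq> t" "W \<subseteq> s"
    "W = topspace X \<inter> (\<Inter>i\<in>I. Ws i)"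
    "\<forall>j\<in>I. t \<union> Ws j = s \<union> Ws j"
  shows "t = s"
proof -
  have tT: "t \<subseteq> topspace X" "s \<subseteq> topspace X"
    using closedin_subset[OF assms(1)] closedin_subset[OF assms(2)] by auto
  have "t = t \<union> W" using assms by auto
  also have "\<dots> = topspace X \<inter> (\<Inter>j\<in>I. t \<union> Ws j)" using tT assms(5) by auto
  also have "\<dots> = topspace X \<inter> (\<Inter>j\<in>I. s \<union> Ws j)" using assms(6) by auto
  also have "\<dots> = s \<union> W" using tT assms(5) by auto
  also have "\<dots> = s" using assms by auto
  finally show ?thesis .
qed

theorem mainTheorem1:
  fixes X :: "'a topology"
  shows "conciliation X (Zfrak X) (\<lambda>W2 W1 Z. Z \<union> W2)"
proof -
  have pre: "pre_conciliation X (Zfrak X) (\<lambda>W2 W1 Z. Z \<union> W2)"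
    unfolding pre_conciliation_def Zfrak_def by auto
  have uni: "unified X (Zfrak X) (\<lambda>W2 W1 Z. Z \<union> W2)"
    unfolding unified_def
  proof (intro conjI pre allI impI ballI)
    fix W I Ws t s
    assume a: "closedin X W \<and> W \<noteq> {} \<and> finite_closed_cocovering X W I Ws"
      and t: "t \<in> Zfrak X W" and s: "s \<in> Zfrak X W"
      and e: "\<forall>j\<in>I. t \<union> Ws j = s \<union> Ws j"
    show "t = s"
      by (rule uni_aux[where X=X and t=t and s=s and W=W and I=I and Ws=Ws]) (use a t s e in \<open>auto simp: Zfrak_def finite_closed_cocovering_def\<close>)
  qed
  show ?thesis unfolding conciliation_def
  proof (intro conjI uni allI impI)
    fix W I Ws ts
    assume a: "closedin X W \<and> W \<noteq> {} \<and> finite_closed_cocovering X W I Ws \<and>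
        (\<forall>i\<in>I. ts i \<in> Zfrak X (Ws i)) \<and>
        (\<forall>i\<in>I. \<forall>j\<in>I. ts i \<union> (Ws i \<union> Ws j) = ts j \<union> (Ws i \<union> Ws j))"
    have fin: "finite I" and cl: "\<forall>i\<in>I. closedin X (Ws i)"
      and W: "W = topspace X \<inter> (\<Inter>i\<in>I. Ws i)"
      using a by (auto simp: finite_closed_cocovering_def)
    have tsc: "\<forall>i\<in>I. closedin X (ts i) \<and> Ws i \<subseteq> ts i" using a by (auto simp: Zfrak_def)
    have tsT: "\<forall>i\<in>I. ts i \<subseteq> topspace X" using tsc closedin_subset by blast
    have WsT: "\<forall>i\<in>I. Ws i \<subseteq> topspace X" using cl closedin_subset by blast
    have comp: "\<forall>i\<in>I. \<forall>j\<in>I. ts i \<union> Ws j = ts j \<union> Ws i"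
    proof (intro ballI)
      fix i j assume ij: "i \<in> I" "j \<in> I"
      have "ts i \<union> Ws j = ts i \<union> (Ws i \<union> Ws j)" using tsc ij by auto
      also have "\<dots> = ts j \<union> (Ws i \<union> Ws j)" using a ij by auto
      also have "\<dots> = ts j \<union> Ws i" using tsc ij by auto
      finally show "ts i \<union> Ws j = ts j \<union> Ws i" .
    qed
    define t where "t = topspace X \<inter> (\<Inter>i\<in>I. ts i)"
    have tcl: "closedin X t"
    proof (cases "I = {}")
      case True then show ?thesis by (simp add: t_def)
    next
      case False
      have "closedin X (\<Inter>i\<in>I. ts i)" using False tsc by (intro closedin_Inter) auto
      then show ?thesis unfolding t_def by (intro closedin_Int) auto
    qed
    have "closedin X t" using tcl .
    moreover have "W \<subseteq> t" using W tsc t_def by auto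
    moreover have glue: "\<forall>i\<in>I. t \<union> Ws i = ts i"
    proof
      fix i assume i: "i \<in> I"
      have "t \<union> Ws i = topspace X \<inter> (\<Inter>j\<in>I. ts j \<union> Ws i)"
        using WsT i unfolding t_def by auto
      also have "\<dots> = topspace X \<inter> (\<Inter>j\<in>I. ts i \<union> Ws j)" using comp i by auto
      also have "\<dots> = ts i \<union> W" using tsT i W by auto
      also have "\<dots> = ts i" using W tsc i by auto
      finally show "t \<union> Ws i = ts i" .
    qed
    ultimately have ex: "t \<in> Zfrak X W \<and> (\<forall>i\<in>I. t \<union> Ws i = ts i)"
      by (auto simp: Zfrak_def)
    show "\<exists>!t. t \<in> Zfrak X W \<and> (\<forall>i\<in>I. t \<union> Ws i = ts i)"
    proof (rule ex1I[of _ t])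
      show "t \<in> Zfrak X W \<and> (\<forall>i\<in>I. t \<union> Ws i = ts i)" using ex .
    next
      fix s assume s: "s \<in> Zfrak X W \<and> (\<forall>i\<in>I. s \<union> Ws i = ts i)"
      show "s = t" by (rule uni_aux[OF _ _ _ _ W]) (use s ex in \<open>auto simp: Zfrak_def\<close>)
    qed
  qed
qed

end
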